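(* Assume (F), fix $\alpha\in\,]0,1[$, and let $0\le u^+<u^-\le V$ with $\hat\rho_{u^-}\le\check\rho_{u^+}$. Then $$u^--u^+\ \ge\ \frac{\beta}{2}\,\big(\hat\rho_{u^-}-\check\rho_{u^-}\big).$$
   Context: Hypothesis (F): $R>0$; $f\in C^2([0,R];[0,+\infty))$ with $f(\rho)=\rho v(\rho)$, $v\in C^2([0,R];[0,+\infty))$; $f(0)=f(R)=0$; there are $B\ge\beta>0$ with $-B\le f''\le-\beta$ on $[0,R]$; $v'(\rho)<0$ for $\rho\in\,]0,R[$. Let $V:=\max_{[0,R]}v=v(0)$. Define $f_\alpha(\rho):=\alpha f(\rho/\alpha)$ for $\rho\in[0,\alpha R]$. For $u\in[0,V]$: $\tilde\rho_u$ is the unique solution of $f_\alpha'(\rho)=u$; $\varphi_u(\rho):=f_\alpha(\tilde\rho_u)+u(\rho-\tilde\rho_u)$ for $\rho\in[0,R]$; $\mathcal I_u:=\{\rho\in[0,R]: f(\rho)=\varphi_u(\rho)\}$, $\check\rho_u:=\min\mathcal I_u$, $\hat\rho_u:=\max\mathcal I_u$. *)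

theory Defs
  imports "HOL-Analysis.Analysis"
begin

definition falpha :: "real \<Rightarrow> (real \<Rightarrow> real) \<Rightarrow> real \<Rightarrow> real" where
  "falpha \<alpha> f \<rho> = \<alpha> * f (\<rho> / \<alpha>)"

definition rho_tilde :: "real \<Rightarrow> real \<Rightarrow> (real \<Rightarrow> real) \<Rightarrow> real \<Rightarrow> real" where
  "rho_tilde \<alpha> R f u = (THE \<rho>. \<rho> \<in> {0..\<alpha>*R} \<and>
      (falpha \<alpha> f has_real_derivative u) (at \<rho> within {0..\<alpha>*R}))"

definition phi :: "real \<Rightarrow> real \<Rightarrow> (real \<Rightarrow> real) \<Rightarrow> real \<Rightarrow> real \<Rightarrow> real" where
  "phi \<alpha> R f u \<rho> = falpha \<alpha> f (rho_tilde \<alpha> R f u) + u * (\<rho> - rho_tilde \<alpha> R f u)"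

definition Iset :: "real \<Rightarrow> real \<Rightarrow> (real \<Rightarrow> real) \<Rightarrow> real \<Rightarrow> real set" where
  "Iset \<alpha> R f u = {\<rho> \<in> {0..R}. f \<rho> = phi \<alpha> R f u \<rho>}"

definition rho_check :: "real \<Rightarrow> real \<Rightarrow> (real \<Rightarrow> real) \<Rightarrow> real \<Rightarrow> real" where
  "rho_check \<alpha> R f u = Inf (Iset \<alpha> R f u)"

definition rho_hat :: "real \<Rightarrow> real \<Rightarrow> (real \<Rightarrow> real) \<Rightarrow> real \<Rightarrow> real" where
  "rho_hat \<alpha> R f u = Sup (Iset \<alpha> R f u)"

end

theory Submission
  imports Defs
begin

lemma mvt_w:
  fixes g g' :: "real \<Rightarrow> real"
  assumes "a < b" "\<forall>x\<in>{a..b}. (g has_real_derivative g' x) (at x within {a..b})"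
  shows "\<exists>z\<in>{a<..<b}. g b - g a = g' z * (b - a)"
proof -
  have "\<exists>z\<in>{a<..<b}. g b - g a = (\<lambda>h. g' z * h) (b - a)"
    apply (rule mvt_simple[OF assms(1)])
    using assms(2) unfolding has_field_derivative_def by auto
  then show ?thesis by auto
qed

lemma sub_der:
  fixes g g' :: "real \<Rightarrow> real"
  assumes "\<forall>x\<in>{0..R}. (g has_real_derivative g' x) (at x within {0..R})" "0 \<le> a" "b \<le> R"
  shows "\<forall>x\<in>{a..b}. (g has_real_derivative g' x) (at x within {a..b})"
proof
  fix x assume x: "x \<in> {a..b}"
  then have "x \<in> {0..R}" using assms by auto
  then have "(g has_real_derivative g' x) (at x within {0..R})" using assms(1) by blast
  then show "(g has_real_derivative g' x) (at x within {a..b})"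
    by (rule DERIV_subset) (use assms in auto)
qed

lemma nontriv: "a < b \<Longrightarrow> x \<in> {a..b} \<Longrightarrow> at x within {a..(b::real)} \<noteq> bot"
  by (metis atLeastAtMost_iff atLeastatMost_empty atLeastatMost_empty_iff
    at_within_Icc_at at_within_Icc_at_left at_within_Icc_at_right
    not_less_iff_gr_or_eq trivial_limit_at trivial_limit_at_left_real
    trivial_limit_at_right_real)

theorem mainTheorem4:
  fixes R \<beta> B \<alpha> up um :: real
    and f f1 f2 v v1 v2 :: "real \<Rightarrow> real"
  assumes R_pos: "R > 0"
    and f_d1: "\<forall>x\<in>{0..R}. (f has_real_derivative f1 x) (at x within {0..R})"
    and f_d2: "\<forall>x\<in>{0..R}. (f1 has_real_derivative f2 x) (at x within {0..R})"
    and f_c2: "continuous_on {0..R} f2"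
    and v_d1: "\<forall>x\<in>{0..R}. (v has_real_derivative v1 x) (at x within {0..R})"
    and v_d2: "\<forall>x\<in>{0..R}. (v1 has_real_derivative v2 x) (at x within {0..R})"
    and v_c2: "continuous_on {0..R} v2"
    and f_nonneg: "\<forall>x\<in>{0..R}. f x \<ge> 0"
    and v_nonneg: "\<forall>x\<in>{0..R}. v x \<ge> 0"
    and f_eq: "\<forall>x\<in>{0..R}. f x = x * v x"
    and f0: "f 0 = 0" and fR: "f R = 0"
    and \<beta>_pos: "\<beta> > 0" and B_ge: "B \<ge> \<beta>"
    and f2_bounds: "\<forall>x\<in>{0..R}. - B \<le> f2 x \<and> f2 x \<le> - \<beta>"
    and v1_neg: "\<forall>x\<in>{0<..<R}. v1 x < 0"
    and \<alpha>: "\<alpha> \<in> {0<..<1}"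
    and u_bounds: "0 \<le> up" "up < um" "um \<le> v 0"
    and rho_ord: "rho_hat \<alpha> R f um \<le> rho_check \<alpha> R f up"
  shows "um - up \<ge> \<beta> / 2 * (rho_hat \<alpha> R f um - rho_check \<alpha> R f um)"
proof -
  have a0: "0 < \<alpha>" and a1: "\<alpha> < 1" using \<alpha> by auto
  have L1: "f1 y - f1 x \<le> - \<beta> * (y - x) \<and> f1 x - f1 y \<le> B * (y - x)"
    if xy: "0 \<le> x" "x < y" "y \<le> R" for x y
  proof -
    have "\<forall>t\<in>{x..y}. (f1 has_real_derivative f2 t) (at t within {x..y})"
      using sub_der[OF f_d2] that by auto
    then obtain z where z: "z \<in> {x<..<y}" "f1 y - f1 x = f2 z * (y - x)"
      using mvt_w[OF xy(2)] by blast
    have zb: "- B \<le> f2 z" "f2 z \<le> - \<beta>" using f2_bounds z that by auto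
    have "f2 z * (y - x) \<le> - \<beta> * (y - x)" using zb that by (intro mult_right_mono) auto
    moreover have "- B * (y - x) \<le> f2 z * (y - x)" using zb that by (intro mult_right_mono) auto
    ultimately show ?thesis using z by auto
  qed
  have L3: "f y \<le> f x + f1 x * (y - x) - \<beta> / 2 * (y - x)^2"
    if "x \<in> {0..R}" "y \<in> {0..R}" for x y
  proof -
    define k where "k = (\<lambda>y. f y - f x - f1 x * (y - x) + \<beta> / 2 * (y - x)^2)"
    have dk: "(k has_real_derivative (f1 t - f1 x + \<beta> * (t - x))) (at t within {0..R})"
      if "t \<in> {0..R}" for t
      unfolding k_def using f_d1 that
      by (auto intro!: derivative_eq_intros simp: algebra_simps) (simp add: field_simps)
    have kx: "k x = 0" by (simp add: k_def)
    consider "x < y" | "y < x" | "x = y" by linarith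
    then show ?thesis
    proof cases
      case 1
      have "\<forall>t\<in>{x..y}. (k has_real_derivative (f1 t - f1 x + \<beta> * (t - x))) (at t within {x..y})"
        using sub_der[of R k, OF ballI[OF dk]] that by auto
      from mvt_w[OF 1 this] obtain z where z: "z \<in> {x<..<y}" "k y - k x = (f1 z - f1 x + \<beta> * (z - x)) * (y - x)"
        by blast
      have "f1 z - f1 x \<le> - \<beta> * (z - x)" using L1[of x z] z that by auto
      then have "(f1 z - f1 x + \<beta> * (z - x)) * (y - x) \<le> 0" using 1
        by (intro mult_nonpos_nonneg) auto
      then have "k y \<le> 0" using z kx by auto
      then show ?thesis by (simp add: k_def)
    next
      case 2
      have "\<forall>t\<in>{y..x}. (k has_real_derivative (f1 t - f1 x + \<beta> * (t - x))) (at t within {y..x})"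
        using sub_der[of R k, OF ballI[OF dk]] that by auto
      from mvt_w[OF 2 this] obtain z where z: "z \<in> {y<..<x}" "k x - k y = (f1 z - f1 x + \<beta> * (z - x)) * (x - y)"
        by blast
      have "f1 x - f1 z \<le> - \<beta> * (x - z)" using L1[of z x] z that by auto
      then have "(f1 z - f1 x + \<beta> * (z - x)) * (x - y) \<ge> 0" using 2
        by (intro mult_nonneg_nonneg) (auto simp: algebra_simps)
      then have "k y \<le> 0" using z kx by auto
      then show ?thesis by (simp add: k_def)
    next
      case 3 then show ?thesis by simp
    qed
  qed
  have cf: "continuous_on {0..R} f" using f_d1 by (intro DERIV_continuous_on) auto
  have cf1: "continuous_on {0..R} f1" using f_d2 by (intro DERIV_continuous_on) auto
  have f10: "f1 0 = v 0"
  proof -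
    have "((\<lambda>x. x * v x) has_real_derivative (1 * v 0 + 0 * v1 0)) (at 0 within {0..R})"
      using DERIV_mult[OF DERIV_ident, of v "v1 0" 0 "{0..R}"] v_d1 R_pos by auto
    then have "((\<lambda>x. x * v x) has_real_derivative v 0) (at 0 within {0..R})" by simp
    then have d1: "(f has_real_derivative v 0) (at 0 within {0..R})"
      by (rule has_field_derivative_transform_within[where d=1]) (use R_pos f_eq in auto)
    have d2: "(f has_real_derivative f1 0) (at 0 within {0..R})" using f_d1 R_pos by auto
    have "0 \<in> {0..R}" using R_pos by auto
    from has_field_derivative_unique[OF d2 d1 nontriv[OF R_pos this]] show ?thesis .
  qed
  have f1R: "f1 R < 0"
  proof -
    from mvt_w[OF R_pos f_d1] obtain z where z: "z \<in> {0<..<R}" "f R - f 0 = f1 z * (R - 0)" by blast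
    then have "f1 z = 0" using f0 fR R_pos by auto
    moreover have "f1 R - f1 z \<le> - \<beta> * (R - z)" using L1[of z R] z by auto
    moreover have "\<beta> * (R - z) > 0" using z \<beta>_pos by auto
    ultimately show ?thesis by linarith
  qed
  have f1inj: "x = y" if "x \<in> {0..R}" "y \<in> {0..R}" "f1 x = f1 y" for x y
  proof (rule ccontr)
    assume "x \<noteq> y"
    then consider "x < y" | "y < x" by linarith
    then show False
    proof cases
      case 1 then have "f1 y - f1 x \<le> - \<beta> * (y - x)" "\<beta> * (y - x) > 0" using L1[of x y] that \<beta>_pos by auto
      then show False using that by linarith
    next
      case 2 then have "f1 x - f1 y \<le> - \<beta> * (x - y)" "\<beta> * (x - y) > 0" using L1[of y x] that \<beta>_pos by auto
      then show False using that by linarith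
    qed
  qed
  have dfa: "(falpha \<alpha> f has_real_derivative f1 (\<rho> / \<alpha>)) (at \<rho> within {0..\<alpha>*R})"
    if "\<rho> \<in> {0..\<alpha>*R}" for \<rho>
  proof -
    have r: "\<rho> / \<alpha> \<in> {0..R}" using that a0 by (auto simp: field_simps)
    have "(f has_real_derivative f1 (\<rho> / \<alpha>)) (at (\<rho> / \<alpha>) within {0..R})" using f_d1 r by auto
    then have "(f has_real_derivative f1 (\<rho> / \<alpha>)) (at ((\<lambda>x. x / \<alpha>) \<rho>) within (\<lambda>x. x / \<alpha>) ` {0..\<alpha>*R})"
      by (rule DERIV_subset) (use a0 in \<open>auto simp: field_simps\<close>)
    moreover have "((\<lambda>x. x / \<alpha>) has_real_derivative 1 / \<alpha>) (at \<rho> within {0..\<alpha>*R})"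
      using a0 by (intro derivative_eq_intros) auto
    ultimately have "(f \<circ> (\<lambda>x. x / \<alpha>) has_real_derivative f1 (\<rho> / \<alpha>) * (1 / \<alpha>)) (at \<rho> within {0..\<alpha>*R})"
      by (rule DERIV_image_chain)
    then have "((\<lambda>x. \<alpha> * (f \<circ> (\<lambda>x. x / \<alpha>)) x) has_real_derivative \<alpha> * (f1 (\<rho> / \<alpha>) * (1 / \<alpha>))) (at \<rho> within {0..\<alpha>*R})"
      by (rule DERIV_cmult)
    then show ?thesis using a0 by (simp add: falpha_def[abs_def] o_def)
  qed
  have tilde: "rho_tilde \<alpha> R f u \<in> {0..\<alpha>*R} \<and> f1 (rho_tilde \<alpha> R f u / \<alpha>) = u"
    if u: "0 \<le> u" "u \<le> v 0" for u
  proof -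
    have "f1 R \<le> u" "u \<le> f1 0" using f1R f10 u by auto
    from IVT2'[OF this _ cf1] R_pos obtain s where s: "0 \<le> s" "s \<le> R" "f1 s = u" by auto
    have aR: "\<alpha> * R > 0" using a0 R_pos by auto
    have ex: "\<exists>!\<rho>. \<rho> \<in> {0..\<alpha>*R} \<and> (falpha \<alpha> f has_real_derivative u) (at \<rho> within {0..\<alpha>*R})"
    proof (rule ex1I)
      show "\<alpha> * s \<in> {0..\<alpha>*R} \<and> (falpha \<alpha> f has_real_derivative u) (at (\<alpha> * s) within {0..\<alpha>*R})"
        using dfa[of "\<alpha> * s"] s a0 by (auto intro: mult_left_mono)
    next
      fix \<rho> assume h: "\<rho> \<in> {0..\<alpha>*R} \<and> (falpha \<alpha> f has_real_derivative u) (at \<rho> within {0..\<alpha>*R})"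
      then have "f1 (\<rho> / \<alpha>) = u" using has_field_derivative_unique[OF dfa[of \<rho>] _ nontriv[OF aR]] by blast
      moreover have "\<rho> / \<alpha> \<in> {0..R}" using h a0 by (auto simp: field_simps)
      ultimately have "\<rho> / \<alpha> = s" using f1inj[of "\<rho> / \<alpha>" s] s by simp
      then show "\<rho> = \<alpha> * s" using a0 by (auto simp: field_simps)
    qed
    have "rho_tilde \<alpha> R f u \<in> {0..\<alpha>*R} \<and> (falpha \<alpha> f has_real_derivative u) (at (rho_tilde \<alpha> R f u) within {0..\<alpha>*R})"
      unfolding rho_tilde_def by (rule theI'[OF ex])
    then show ?thesis using has_field_derivative_unique[OF dfa[of "rho_tilde \<alpha> R f u"] _ nontriv[OF aR]] by blast
  qed
  have iset: "phi \<alpha> R f u 0 \<ge> 0 \<and> Iset \<alpha> R f u \<noteq> {} \<and> closed (Iset \<alpha> R f u)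
      \<and> bdd_below (Iset \<alpha> R f u) \<and> bdd_above (Iset \<alpha> R f u)"
    if u: "0 \<le> u" "u \<le> v 0" for u
  proof -
    define t where "t = rho_tilde \<alpha> R f u"
    define s where "s = t / \<alpha>"
    have t: "t \<in> {0..\<alpha>*R}" "f1 s = u" using tilde[OF u] by (auto simp: t_def s_def)
    have ts: "t = \<alpha> * s" using a0 by (simp add: s_def)
    have aR: "\<alpha> * R \<le> R" using a1 R_pos by auto
    have sR: "s \<in> {0..R}" using t a0 by (auto simp: s_def field_simps)
    have tR: "t \<in> {0..R}" using t aR by auto
    have phi_eq: "phi \<alpha> R f u \<rho> = \<alpha> * f s + u * (\<rho> - t)" for \<rho>
      by (simp add: phi_def falpha_def t_def s_def)
    have "f 0 \<le> f s + f1 s * (0 - s) - \<beta> / 2 * (0 - s)^2" using L3[OF sR, of 0] R_pos by auto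
    moreover have "0 \<le> \<beta> / 2 * (0 - s)^2" using \<beta>_pos by simp
    moreover have "f1 s * (0 - s) = - (u * s)" using t(2) by simp
    ultimately have "f s - u * s \<ge> 0" using f0 by linarith
    then have "\<alpha> * (f s - u * s) \<ge> 0" using a0 by simp
    then have p0: "phi \<alpha> R f u 0 \<ge> 0" by (simp add: phi_eq ts algebra_simps)
    have q1: "0 \<le> \<beta> / 2 * (s - t)^2" "0 \<le> \<beta> / 2 * (0 - t)^2" using \<beta>_pos by simp_all
    have e1: "f s \<le> f t + f1 t * (s - t)"
      using L3[OF tR sR] q1 by linarith
    have "f 0 \<le> f t + f1 t * (0 - t) - \<beta> / 2 * (0 - t)^2" using L3[OF tR, of 0] R_pos by auto
    then have e2: "f 0 \<le> f t + f1 t * (0 - t)" using q1 by linarith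
    have "\<alpha> * f s \<le> \<alpha> * (f t + f1 t * (s - t))" using e1 a0 by (simp add: mult_left_mono)
    moreover have "0 \<le> (1 - \<alpha>) * (f t + f1 t * (0 - t))" using e2 a1 f0 by simp
    ultimately have "\<alpha> * f s \<le> f t + f1 t * (\<alpha> * s - t)" by (simp add: algebra_simps)
    then have pt: "f t - phi \<alpha> R f u t \<ge> 0" by (simp add: phi_eq ts)
    have cphi: "continuous_on A (\<lambda>\<rho>. phi \<alpha> R f u \<rho>)" for A
      unfolding phi_def by (intro continuous_intros)
    have ch: "continuous_on {0..R} (\<lambda>\<rho>. f \<rho> - phi \<alpha> R f u \<rho>)"
      by (intro continuous_intros cf cphi)
    have "continuous_on {0..t} (\<lambda>\<rho>. f \<rho> - phi \<alpha> R f u \<rho>)"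
      by (rule continuous_on_subset[OF ch]) (use tR in auto)
    from IVT'[of "\<lambda>\<rho>. f \<rho> - phi \<alpha> R f u \<rho>" 0 0 t, OF _ pt _ this] p0 f0 tR
    obtain x where "0 \<le> x" "x \<le> t" "f x - phi \<alpha> R f u x = 0" by auto
    then have "x \<in> Iset \<alpha> R f u" using tR by (auto simp: Iset_def)
    then have ne: "Iset \<alpha> R f u \<noteq> {}" by auto
    have "closed {\<rho> \<in> {0..R}. f \<rho> - phi \<alpha> R f u \<rho> = 0}"
      by (rule continuous_closed_preimage_constant[OF ch]) auto
    moreover have "{\<rho> \<in> {0..R}. f \<rho> - phi \<alpha> R f u \<rho> = 0} = Iset \<alpha> R f u"
      by (auto simp: Iset_def)
    ultimately have cl: "closed (Iset \<alpha> R f u)" by simp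
    have "Iset \<alpha> R f u \<subseteq> {0..R}" by (auto simp: Iset_def)
    then have "bdd_below (Iset \<alpha> R f u)" "bdd_above (Iset \<alpha> R f u)"
      by (auto intro: bdd_below_mono bdd_above_mono)
    then show ?thesis using p0 ne cl by auto
  qed
  have um0: "0 \<le> um" "um \<le> v 0" and up0: "0 \<le> up" "up \<le> v 0" using u_bounds by auto
  define a where "a = rho_check \<alpha> R f um"
  define b where "b = rho_hat \<alpha> R f um"
  define c where "c = rho_check \<alpha> R f up"
  have aI: "a \<in> Iset \<alpha> R f um" unfolding a_def rho_check_def
    using iset[OF um0] by (intro closed_contains_Inf) auto
  have bI: "b \<in> Iset \<alpha> R f um" unfolding b_def rho_hat_def
    using iset[OF um0] by (intro closed_contains_Sup) auto
  have cI: "c \<in> Iset \<alpha> R f up" unfolding c_def rho_check_def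
    using iset[OF up0] by (intro closed_contains_Inf) auto
  have cmin: "c \<le> x" if "x \<in> Iset \<alpha> R f up" for x
    unfolding c_def rho_check_def using iset[OF up0] that by (intro cInf_lower) auto
  have bc: "b \<le> c" using rho_ord by (simp add: b_def c_def)
  have aR: "a \<in> {0..R}" and bR: "b \<in> {0..R}" and cR: "c \<in> {0..R}"
    using aI bI cI by (auto simp: Iset_def)
  have fa: "f a = phi \<alpha> R f um a" and fb: "f b = phi \<alpha> R f um b" and fc: "f c = phi \<alpha> R f up c"
    using aI bI cI by (auto simp: Iset_def)
  have phid: "phi \<alpha> R f u x - phi \<alpha> R f u y = u * (x - y)" for u x y
    by (simp add: phi_def algebra_simps)
  show ?thesis
  proof (cases "b \<le> a")
    case True
    then have "\<beta> / 2 * (b - a) \<le> 0" using \<beta>_pos by (simp add: mult_nonneg_nonpos)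
    then show ?thesis using u_bounds by (simp add: b_def a_def)
  next
    case False
    then have ab: "a < b" by simp
    have "f a \<le> f b + f1 b * (a - b) - \<beta> / 2 * (a - b)^2" using L3[OF bR aR] .
    then have "um * (a - b) \<le> f1 b * (a - b) - \<beta> / 2 * (a - b)^2"
      using fa fb phid[of um a b] by linarith
    moreover have "(f1 b - um + \<beta> / 2 * (b - a)) * (b - a) = - (f1 b * (a - b) - \<beta> / 2 * (a - b)^2 - um * (a - b))"
      by (simp add: field_simps power2_eq_square)
    ultimately have "(f1 b - um + \<beta> / 2 * (b - a)) * (b - a) \<le> 0" by linarith
    then have fb1: "f1 b \<le> um - \<beta> / 2 * (b - a)" using ab
      by (simp add: mult_le_0_iff)
    have c0: "0 < c" using aR ab bc by auto
    have fc1: "up \<le> f1 c"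
    proof (rule ccontr)
      assume "\<not> up \<le> f1 c"
      then have e: "up - f1 c > 0" by simp
      have Bp: "B > 0" using B_ge \<beta>_pos by simp
      define d where "d = min c ((up - f1 c) / (2 * B))"
      have d0: "0 < d" using c0 e Bp by (simp add: d_def)
      have dc: "d \<le> c" by (simp add: d_def)
      have dB: "B * d \<le> (up - f1 c) / 2" using Bp by (simp add: d_def min_def field_simps)
      define y where "y = c - d"
      have y: "0 \<le> y" "y < c" using d0 dc by (auto simp: y_def)
      have yR: "y \<in> {0..R}" using y cR by auto
      have "f c \<le> f y + f1 y * (c - y) - \<beta> / 2 * (c - y)^2" using L3[OF yR cR] .
      moreover have "0 \<le> \<beta> / 2 * (c - y)^2" using \<beta>_pos by simp
      moreover have "f1 y - f1 c \<le> B * (c - y)" using L1[of y c] y cR by auto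
      ultimately have "f y - phi \<alpha> R f up y \<ge> (up - f1 y) * (c - y)"
        using fc phid[of up c y] by (simp add: algebra_simps)
      moreover have "(up - f1 y) * (c - y) > 0"
      proof -
        have "up - f1 y > 0" using \<open>f1 y - f1 c \<le> B * (c - y)\<close> dB e by (simp add: y_def)
        then show ?thesis using y by simp
      qed
      ultimately have hy: "f y - phi \<alpha> R f up y \<ge> 0" by linarith
      have h0: "f 0 - phi \<alpha> R f up 0 \<le> 0" using iset[OF up0] f0 by simp
      have cphi: "continuous_on A (\<lambda>\<rho>. phi \<alpha> R f up \<rho>)" for A
        unfolding phi_def by (intro continuous_intros)
      have "continuous_on {0..y} (\<lambda>\<rho>. f \<rho> - phi \<alpha> R f up \<rho>)"
        by (intro continuous_intros cphi continuous_on_subset[OF cf]) (use yR in auto)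
      from IVT'[of "\<lambda>\<rho>. f \<rho> - phi \<alpha> R f up \<rho>" 0 0 y, OF h0 hy y(1) this]
      obtain x where x: "0 \<le> x" "x \<le> y" "f x - phi \<alpha> R f up x = 0" by auto
      then have "x \<in> Iset \<alpha> R f up" using yR by (auto simp: Iset_def)
      then have "c \<le> x" by (rule cmin)
      then show False using x y by linarith
    qed
    have "f1 c \<le> f1 b"
    proof (cases "b < c")
      case True
      then have "f1 c - f1 b \<le> - \<beta> * (c - b)" using L1[of b c] bR cR by auto
      moreover have "\<beta> * (c - b) > 0" using True \<beta>_pos by simp
      ultimately show ?thesis by linarith
    next
      case False then show ?thesis using bc by simp
    qed
    then show ?thesis using fb1 fc1 by (simp add: a_def b_def)
  qed
qed

end
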